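(* Let $\Omega$ be a finite set, $f:2^{\Omega}\to\mathbb{R}_{+}$ nonnegative and increasing, $K\in\{1,\dots,|\Omega|\}$ and $L\in\{0,\dots,|\Omega|\}$. Let $\widehat{\mathcal{S}}_K\in\arg\max\{f(\mathcal{S}):|\mathcal{S}|\le K\}$, let $\mathcal{S}_0,\dots,\mathcal{S}_L$ be the greedy sets and $\mathscr{C}_L=\{\emptyset,\mathcal{S}_1,\dots,\mathcal{S}_L\}$. Then $$f(\mathcal{S}_L)\ge\min\Big\{f(\widehat{\mathcal{S}}_K),\ (1-(1-1/K)^L)\big[f(\widehat{\mathcal{S}}_K)-\min\{\widehat{\mathcal{I}}^{\mathscr{C}_L,K}[f],f(\widehat{\mathcal{S}}_K)\}\big]\Big\}.$$
   Context: Greedy algorithm: $\mathcal{S}_0=\emptyset$ and $\mathcal{S}_{\ell+1}=\mathcal{S}_\ell\cup\{s_{\ell+1}\}$ with $s_{\ell+1}\in\arg\max_{s\in\Omega\setminus\mathcal{S}_\ell}f(\mathcal{S}_\ell\cup\{s\})$. Local submodularity index: $\phi^{\mathcal{A},\mathcal{B}}[f]=[f(\mathcal{A}\cup\mathcal{B})-f(\mathcal{A})]-\sum_{s\in\mathcal{B}}[f(\mathcal{A}\cup\{s\})-f(\mathcal{A})]$. For a collection $\mathscr{C}$ of subsets of $\Omega$, $\widehat{\mathcal{I}}^{\mathscr{C},K}[f]=\max\{\phi^{\mathcal{A},\mathcal{B}}[f]:\mathcal{A}\in\mathscr{C},\mathcal{B}\subseteq\Omega,\mathcal{A}\cap\mathcal{B}=\emptyset,2\le|\mathcal{B}|\le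 K\}$, and $\widehat{\mathcal{I}}^{\mathscr{C},K}[f]=0$ if no such pair exists. *)

theory Defs
  imports Main "HOL.Real"
begin

definition local_submod_index ::
  "('a set \<Rightarrow> real) \<Rightarrow> 'a set \<Rightarrow> 'a set \<Rightarrow> real" where
  "local_submod_index f A B =
     (f (A \<union> B) - f A) - (\<Sum>s\<in>B. f (A \<union> {s}) - f A)"

definition submod_index ::
  "'a set \<Rightarrow> ('a set \<Rightarrow> real) \<Rightarrow> 'a set set \<Rightarrow> nat \<Rightarrow> real" where
  "submod_index \<Omega> f C K =
     (let P = {(A, B). A \<in> C \<and> B \<subseteq> \<Omega> \<and> A \<inter> B = {} \<and> 2 \<le> card B \<and> card B \<le> K}
      in if P = {} then 0 else Max ((\<lambda>(A, B). local_submod_index f A B) ` P))"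

definition greedy_seq :: "'a set \<Rightarrow> ('a set \<Rightarrow> real) \<Rightarrow> (nat \<Rightarrow> 'a set) \<Rightarrow> nat \<Rightarrow> bool" where
  "greedy_seq \<Omega> f S L \<longleftrightarrow> S 0 = {} \<and>
     (\<forall>l<L. \<exists>s. s \<in> \<Omega> - S l \<and> S (Suc l) = S l \<union> {s} \<and>
        (\<forall>t\<in>\<Omega> - S l. f (S l \<union> {t}) \<le> f (S l \<union> {s})))"

end

theory Submission
  imports Defs
begin

theorem mainTheorem14:
  fixes \<Omega> :: "'a set" and f :: "'a set \<Rightarrow> real" and K L :: nat
    and S :: "nat \<Rightarrow> 'a set" and Shat :: "'a set"
  assumes fin: "finite \<Omega>"
    and nonneg: "\<And>X. X \<subseteq> \<Omega> \<Longrightarrow> 0 \<le> f X"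
    and incr: "\<And>X Y. X \<subseteq> Y \<Longrightarrow> Y \<subseteq> \<Omega> \<Longrightarrow> f X \<le> f Y"
    and K: "1 \<le> K" "K \<le> card \<Omega>"
    and L: "L \<le> card \<Omega>"
    and Shat: "Shat \<subseteq> \<Omega>" "card Shat \<le> K"
      "\<And>X. X \<subseteq> \<Omega> \<Longrightarrow> card X \<le> K \<Longrightarrow> f X \<le> f Shat"
    and greedy: "greedy_seq \<Omega> f S L"
  shows "f (S L) \<ge> min (f Shat)
           ((1 - (1 - 1 / real K) ^ L) *
             (f Shat - min (submod_index \<Omega> f (S ` {0..L}) K) (f Shat)))"
proof -
  define OPT where "OPT = f Shat"
  define I where "I = submod_index \<Omega> f (S ` {0..L}) K"
  define q where "q = 1 - 1 / real K"
  have S0: "S 0 = {}" using greedy unfolding greedy_seq_def by blast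
  have step: "\<exists>s. s \<in> \<Omega> - S l \<and> S (Suc l) = S l \<union> {s} \<and>
        (\<forall>t\<in>\<Omega> - S l. f (S l \<union> {t}) \<le> f (S l \<union> {s}))" if "l < L" for l
    using greedy that unfolding greedy_seq_def by blast
  have SsubO: "S l \<subseteq> \<Omega>" if "l \<le> L" for l
    using that
  proof (induction l)
    case 0 then show ?case using S0 by simp
  next
    case (Suc l)
    have lL: "l < L" using Suc.prems by simp
    obtain s where "s \<in> \<Omega> - S l" "S (Suc l) = S l \<union> {s}" using step[OF lL] by blast
    moreover have "S l \<subseteq> \<Omega>" using Suc.IH lL by simp
    ultimately show ?case by auto
  qed
  have mono: "S l \<subseteq> S m" if "l \<le> m" "m \<le> L" for l m
    using that
  proof (induction m)
    case 0 then show ?case by simp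
  next
    case (Suc m)
    show ?case
    proof (cases "l = Suc m")
      case True then show ?thesis by simp
    next
      case False
      then have "l \<le> m" using Suc by simp
      have mL: "m < L" using Suc.prems by simp
      obtain s where "S (Suc m) = S m \<union> {s}" using step[OF mL] by blast
      moreover have "S l \<subseteq> S m" using Suc.IH \<open>l \<le> m\<close> mL by simp
      ultimately show ?thesis by auto
    qed
  qed
  have fS: "0 \<le> f (S l)" if "l \<le> L" for l using nonneg[OF SsubO[OF that]] .
  show ?thesis
  proof (cases "\<exists>l<L. card (Shat - S l) < 2")
    case True
    then obtain l where l: "l < L" "card (Shat - S l) < 2" by blast
    obtain s where s: "s \<in> \<Omega> - S l" "S (Suc l) = S l \<union> {s}"
      "\<forall>t\<in>\<Omega> - S l. f (S l \<union> {t}) \<le> f (S l \<union> {s})" using step l(1) by blast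
    have SlO: "S l \<subseteq> \<Omega>" using SsubO l by simp
    have "OPT \<le> f (S (Suc l))"
    proof (cases "Shat - S l = {}")
      case True
      then have "Shat \<subseteq> S (Suc l)" using s by auto
      moreover have "S (Suc l) \<subseteq> \<Omega>" using SsubO[of "Suc l"] l by simp
      ultimately show ?thesis unfolding OPT_def by (rule incr)
    next
      case False
      have "finite (Shat - S l)" using fin Shat(1) finite_subset by blast
      then have "card (Shat - S l) = 1" using False l(2) card_0_eq by fastforce
      then obtain t where t: "Shat - S l = {t}" using card_1_singletonE by blast
      then have tO: "t \<in> \<Omega> - S l" using Shat(1) by auto
      have "Shat \<subseteq> S l \<union> {t}" using t by auto
      moreover have "S l \<union> {t} \<subseteq> \<Omega>" using SlO tO by simp
      ultimately have "f Shat \<le> f (S l \<union> {t})" by (rule incr)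
      also have "\<dots> \<le> f (S (Suc l))" using s tO by simp
      finally show ?thesis unfolding OPT_def .
    qed
    also have "\<dots> \<le> f (S L)" using incr[OF mono[of "Suc l" L] SsubO[of L]] l by simp
    finally show ?thesis unfolding OPT_def by simp
  next
    case False
    then have big: "2 \<le> card (Shat - S l)" if "l < L" for l using that by force
    show ?thesis
    proof (cases "I < OPT")
      case False
      then have "min I OPT = OPT" by simp
      then show ?thesis using fS[of L] unfolding I_def OPT_def by simp
    next
      case True
      have rec: "OPT - f (S l) \<le> I + real K * (f (S (Suc l)) - f (S l))" if l: "l < L" for l
      proof -
        define B where "B = Shat - S l"
        obtain s where s: "s \<in> \<Omega> - S l" "S (Suc l) = S l \<union> {s}"
          "\<forall>t\<in>\<Omega> - S l. f (S l \<union> {t}) \<le> f (S l \<union> {s})" using step l by blast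
        have SlO: "S l \<subseteq> \<Omega>" using SsubO l by simp
        have BO: "B \<subseteq> \<Omega>" using Shat(1) B_def by auto
        have cB: "2 \<le> card B" "card B \<le> K"
          using big l B_def Shat card_mono[OF finite_subset[OF Shat(1) fin], of B] by auto
        define P where "P = {(A, B). A \<in> S ` {0..L} \<and> B \<subseteq> \<Omega> \<and> A \<inter> B = {} \<and> 2 \<le> card B \<and> card B \<le> K}"
        have inP: "(S l, B) \<in> P" unfolding P_def using l BO cB B_def by auto
        have finP: "finite P"
        proof -
          have "P \<subseteq> (S ` {0..L}) \<times> Pow \<Omega>" unfolding P_def by auto
          then show ?thesis using fin finite_subset by blast
        qed
        have phi: "local_submod_index f (S l) B \<le> I"
        proof -
          have "I = Max ((\<lambda>(A, B). local_submod_index f A B) ` P)"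
            unfolding I_def submod_index_def P_def[symmetric] using inP by auto
          moreover have "local_submod_index f (S l) B \<in> (\<lambda>(A, B). local_submod_index f A B) ` P"
            using inP by force
          ultimately show ?thesis using finP by simp
        qed
        have gain: "0 \<le> f (S (Suc l)) - f (S l)" using incr[OF mono[of l "Suc l"] SsubO[of "Suc l"]] l by simp
        have "(\<Sum>t\<in>B. f (S l \<union> {t}) - f (S l)) \<le> (\<Sum>t\<in>B. f (S (Suc l)) - f (S l))"
          apply (rule sum_mono) using s BO B_def by auto
        also have "\<dots> = real (card B) * (f (S (Suc l)) - f (S l))" by simp
        also have "\<dots> \<le> real K * (f (S (Suc l)) - f (S l))"
          using cB gain by (simp add: mult_right_mono)
        finally have sumle: "(\<Sum>t\<in>B. f (S l \<union> {t}) - f (S l)) \<le> real K * (f (S (Suc l)) - f (S l))" .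
        have "OPT \<le> f (S l \<union> B)" unfolding OPT_def B_def
          using incr[of Shat "S l \<union> (Shat - S l)"] SlO Shat(1) by auto
        then show ?thesis using phi sumle unfolding local_submod_index_def by linarith
      qed
      have q0: "0 \<le> q" "q \<le> 1" unfolding q_def using K(1) by (auto simp: field_simps)
      have ind: "OPT - f (S n) \<le> q ^ n * (OPT - I) + I" if "n \<le> L" for n
        using that
      proof (induction n)
        case 0
        then show ?case using S0 nonneg[of "{}"] by simp
      next
        case (Suc n)
        then have IH: "OPT - f (S n) \<le> q ^ n * (OPT - I) + I" by simp
        have r: "OPT - f (S n) \<le> I + real K * (f (S (Suc n)) - f (S n))" using rec Suc by simp
        have Kp: "real K > 0" using K(1) by simp
        have "real K * (OPT - f (S (Suc n))) \<le> (real K - 1) * (OPT - f (S n)) + I"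
          using r by (simp add: algebra_simps)
        also have "\<dots> \<le> (real K - 1) * (q ^ n * (OPT - I) + I) + I"
          using IH K(1) by (intro add_right_mono mult_left_mono) auto
        also have "\<dots> = real K * (q ^ Suc n * (OPT - I) + I)"
          unfolding q_def using Kp by (simp add: field_simps)
        finally show ?case using Kp by simp
      qed
      have "(1 - q ^ L) * (OPT - I) \<le> f (S L)" using ind[of L] by (simp add: algebra_simps)
      moreover have "min I OPT = I" using True by simp
      ultimately show ?thesis unfolding q_def OPT_def I_def by simp
    qed
  qed
qed

end
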